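(* For every integer $k\ge 3$ there exists a $K_3$-WORM-colorable graph $F_k$ such that $W^-(F_k,K_3)=k$.
   Context: A $K_3$-WORM coloring of a graph $G$ is an assignment of colors to the vertices of $G$ such that the three vertices of every triangle ($K_3$-subgraph) of $G$ receive exactly two distinct colors (no triangle is monochromatic or rainbow). $G$ is $K_3$-WORM-colorable if it has such a coloring, and then $W^-(G,K_3)$ is the minimum number of colors used in a $K_3$-WORM coloring of $G$. *)

theory Defs
  imports Main
begin

definition simple_graph :: "'a set \<Rightarrow> ('a \<Rightarrow> 'a \<Rightarrow> bool) \<Rightarrow> bool" where
  "simple_graph V E \<longleftrightarrow> finite V \<and>
     (\<forall>x y. E x y \<longrightarrow> x \<in> V \<and> y \<in> V) \<and>
     (\<forall>x y. E x y \<longrightarrow> E y x) \<and> (\<forall>x. \<not> E x x)"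

definition triangle :: "'a set \<Rightarrow> ('a \<Rightarrow> 'a \<Rightarrow> bool) \<Rightarrow> 'a \<Rightarrow> 'a \<Rightarrow> 'a \<Rightarrow> bool" where
  "triangle V E a b c \<longleftrightarrow> a \<in> V \<and> b \<in> V \<and> c \<in> V \<and>
     a \<noteq> b \<and> b \<noteq> c \<and> a \<noteq> c \<and> E a b \<and> E b c \<and> E a c"

definition K3_worm_coloring :: "'a set \<Rightarrow> ('a \<Rightarrow> 'a \<Rightarrow> bool) \<Rightarrow> ('a \<Rightarrow> nat) \<Rightarrow> bool" where
  "K3_worm_coloring V E f \<longleftrightarrow>
     (\<forall>a b c. triangle V E a b c \<longrightarrow> card {f a, f b, f c} = 2)"

definition K3_worm_colorable :: "'a set \<Rightarrow> ('a \<Rightarrow> 'a \<Rightarrow> bool) \<Rightarrow> bool" where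
  "K3_worm_colorable V E \<longleftrightarrow> (\<exists>f. K3_worm_coloring V E f)"

definition W_minus_K3 :: "'a set \<Rightarrow> ('a \<Rightarrow> 'a \<Rightarrow> bool) \<Rightarrow> nat" where
  "W_minus_K3 V E = (LEAST n. \<exists>f. K3_worm_coloring V E f \<and> card (f ` V) = n)"

end

theory Submission imports Defs "HOL-Library.Countable" begin

lemma card3_2: "card {a,b,c::nat} = 2 \<longleftrightarrow> ((a=b \<and> b\<noteq>c) \<or> (a=c \<and> b\<noteq>c) \<or> (b=c \<and> a\<noteq>b))"
  by (auto simp: card_insert_if)

lemma gadget:
  fixes a :: "nat \<Rightarrow> nat"
  assumes "card {a 0,a 3,a 4} = 2" "card {a 0,a 3,a 5} = 2" "card {a 0,a 4,a 5} = 2" "card {a 1,a 2,a 5} = 2"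
   "card {a 1,a 2,a 7} = 2" "card {a 1,a 5,a 6} = 2" "card {a 1,a 5,a 7} = 2" "card {a 1,a 6,a 7} = 2"
   "card {a 2,a 3,a 5} = 2" "card {a 2,a 3,a 7} = 2" "card {a 2,a 5,a 7} = 2" "card {a 3,a 4,a 5} = 2"
   "card {a 3,a 4,a 7} = 2" "card {a 3,a 5,a 7} = 2" "card {a 4,a 5,a 6} = 2" "card {a 4,a 5,a 7} = 2"
   "card {a 4,a 6,a 7} = 2" "card {a 5,a 6,a 7} = 2"
  shows "a 0 \<noteq> a 1"
  using assms unfolding card3_2 by smt

definition gedges :: "(nat \<times> nat) list" where
  "gedges = [(0, 3), (0, 4), (0, 5), (1, 2), (1, 5), (1, 6), (1, 7), (2, 3), (2, 5), (2, 7),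
    (3, 4), (3, 5), (3, 7), (4, 5), (4, 6), (4, 7), (5, 6), (5, 7), (6, 7)]"

definition gE :: "nat \<Rightarrow> nat \<Rightarrow> bool" where
  "gE s t \<longleftrightarrow> (s,t) \<in> set gedges \<or> (t,s) \<in> set gedges"

type_synonym vt = "nat + nat \<times> nat \<times> nat"

definition loc :: "nat \<Rightarrow> nat \<Rightarrow> nat \<Rightarrow> vt" where
  "loc i j s = (if s = 0 then Inl i else if s = 1 then Inl j else Inr (i,j,s))"

definition GV :: "nat \<Rightarrow> vt set" where
  "GV k = Inl ` {..<k} \<union> {Inr (i,j,s) | i j s. i<j \<and> j<k \<and> 2 \<le> s \<and> s < 8}"

definition GE :: "nat \<Rightarrow> vt \<Rightarrow> vt \<Rightarrow> bool" where
  "GE k u v \<longleftrightarrow> (\<exists>i j s t. i<j \<and> j<k \<and> gE s t \<and> u = loc i j s \<and> v = loc i j t)"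

fun col :: "vt \<Rightarrow> nat" where
  "col (Inl i) = i"
| "col (Inr (i,j,s)) = (if s = 5 \<or> s = 7 then i else j)"

lemma gE_sym: "gE s t \<Longrightarrow> gE t s" by (auto simp: gE_def)
lemma gE_irr: "\<not> gE s s" by (auto simp: gE_def gedges_def)
lemma gE_lt: "gE s t \<Longrightarrow> s < 8 \<and> t < 8" by (auto simp: gE_def gedges_def)
lemma gE_01: "\<not> gE 0 1" "\<not> gE 1 0" by (auto simp: gE_def gedges_def)

lemma loc_in: "i<j \<Longrightarrow> j<k \<Longrightarrow> s<8 \<Longrightarrow> loc i j s \<in> GV k"
  by (auto simp: loc_def GV_def)

lemma loc_inj: "i \<noteq> j \<Longrightarrow> loc i j s = loc i j t \<Longrightarrow> s = t"
  by (auto simp: loc_def split: if_splits)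

lemma loc_Inr: "loc i j s = Inr (a,b,c) \<Longrightarrow> a = i \<and> b = j \<and> c = s"
  by (auto simp: loc_def split: if_splits)

lemma loc_Inl: "loc i j s = Inl a \<Longrightarrow> (s = 0 \<and> a = i) \<or> (s = 1 \<and> a = j)"
  by (auto simp: loc_def split: if_splits)

lemma GE_sym: "GE k u v \<Longrightarrow> GE k v u"
  unfolding GE_def by (blast intro: gE_sym)

lemma GE_Inl: "\<not> GE k (Inl a) (Inl b)"
proof
  assume "GE k (Inl a) (Inl b)"
  then obtain i j s t where "gE s t" "Inl a = loc i j s" "Inl b = loc i j t"
    unfolding GE_def by blast
  then show False using loc_Inl[of i j s a] loc_Inl[of i j t b] gE_01 gE_irr by metis
qed

lemma GE_Inr: assumes "GE k (Inr (a,b,c)) v"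
  shows "a<b \<and> b<k \<and> (\<exists>t. gE c t \<and> v = loc a b t) \<and> Inr (a,b,c) = loc a b c"
proof -
  obtain i j s t where h: "i<j" "j<k" "gE s t" "Inr (a,b,c) = loc i j s" "v = loc i j t"
    using assms unfolding GE_def by blast
  then have "a = i \<and> b = j \<and> c = s" using loc_Inr by metis
  then show ?thesis using h by auto
qed

lemma center:
  assumes x: "x = Inr (a,b,c)" and xy: "GE k x y" and xz: "GE k x z" and yz: "GE k y z"
  shows "\<exists>s t u. a<b \<and> b<k \<and> gE s t \<and> gE t u \<and> gE s u \<and> x = loc a b s \<and> y = loc a b t \<and> z = loc a b u"
proof -
  from GE_Inr[OF xy[unfolded x]] obtain t where t: "a<b" "b<k" "gE c t" "y = loc a b t" "x = loc a b c"
    using x by blast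
  from GE_Inr[OF xz[unfolded x]] obtain u where u: "gE c u" "z = loc a b u" by blast
  have ab: "a \<noteq> b" using t by simp
  have "gE t u"
  proof (cases y)
    case (Inr p)
    then obtain a' b' c' where yy: "y = Inr (a',b',c')" by (metis prod_cases3)
    then have "a' = a \<and> b' = b \<and> c' = t" using t(4) loc_Inr by metis
    with GE_Inr[OF yz[unfolded yy]] obtain u' where "gE t u'" "z = loc a b u'" by blast
    then show ?thesis using u(2) loc_inj[OF ab] by metis
  next
    case (Inl p)
    show ?thesis
    proof (cases z)
      case (Inr q)
      then obtain a' b' c' where zz: "z = Inr (a',b',c')" by (metis prod_cases3)
      then have "a' = a \<and> b' = b \<and> c' = u" using u(2) loc_Inr by metis
      with GE_Inr[OF GE_sym[OF yz, unfolded zz]] obtain t' where "gE u t'" "y = loc a b t'" by blast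
      then show ?thesis using t(4) loc_inj[OF ab] gE_sym by metis
    next
      case (Inl q)
      then show ?thesis using yz \<open>y = Inl p\<close> GE_Inl by metis
    qed
  qed
  then show ?thesis using t u by blast
qed

lemma tri_local:
  assumes "Defs.triangle (GV k) (GE k) x y z"
  shows "\<exists>i j s t u. i<j \<and> j<k \<and> gE s t \<and> gE t u \<and> gE s u \<and> x = loc i j s \<and> y = loc i j t \<and> z = loc i j u"
proof -
  have e: "GE k x y" "GE k y z" "GE k x z" using assms by (auto simp: Defs.triangle_def)
  show ?thesis
  proof (cases x)
    case (Inr p)
    then obtain a b c where "x = Inr (a,b,c)" by (metis prod_cases3)
    from center[OF this e(1) e(3) e(2)] show ?thesis by blast
  next
    case (Inl p)
    show ?thesis
    proof (cases y)
      case (Inr q)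
      then obtain a b c where "y = Inr (a,b,c)" by (metis prod_cases3)
      from center[OF this GE_sym[OF e(1)] e(2) e(3)] show ?thesis using gE_sym by blast
    next
      case (Inl q)
      show ?thesis
      proof (cases z)
        case (Inr r)
        then obtain a b c where "z = Inr (a,b,c)" by (metis prod_cases3)
        from center[OF this GE_sym[OF e(3)] GE_sym[OF e(2)] e(1)] show ?thesis using gE_sym by blast
      next
        case (Inl r)
        then show ?thesis using e(1) \<open>x = Inl p\<close> \<open>y = Inl q\<close> GE_Inl by metis
      qed
    qed
  qed
qed

definition cl :: "nat \<Rightarrow> bool" where "cl s \<longleftrightarrow> s = 0 \<or> s = 5 \<or> s = 7"

lemma col_loc: "col (loc i j s) = (if cl s then i else j)"
  by (auto simp: loc_def cl_def)

lemma local_ok: "gE s t \<Longrightarrow> gE t u \<Longrightarrow> gE s u \<Longrightarrow> \<not> (cl s = cl t \<and> cl t = cl u)"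
proof -
  have "\<forall>s<8. \<forall>t<8. \<forall>u<8. gE s t \<longrightarrow> gE t u \<longrightarrow> gE s u \<longrightarrow> \<not> (cl s = cl t \<and> cl t = cl u)"
    by (simp add: All_less_Suc numeral_eq_Suc gE_def gedges_def cl_def)
  then show "gE s t \<Longrightarrow> gE t u \<Longrightarrow> gE s u \<Longrightarrow> \<not> (cl s = cl t \<and> cl t = cl u)"
    using gE_lt by blast
qed

lemma GV_finite: "finite (GV k)"
proof -
  have "{Inr (i,j,s) | i j s. i<j \<and> j<k \<and> 2 \<le> s \<and> s < 8} \<subseteq> Inr ` ({..<k} \<times> {..<k} \<times> {..<8::nat})"
    by auto
  then have "finite {Inr (i,j,s) | i j s. i<j \<and> j<k \<and> 2 \<le> s \<and> s < (8::nat)}"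
    by (rule finite_subset) auto
  then show ?thesis unfolding GV_def by auto
qed

lemma GE_in: "GE k u v \<Longrightarrow> u \<in> GV k \<and> v \<in> GV k"
  unfolding GE_def using loc_in gE_lt by blast

lemma GE_irr: "\<not> GE k u u"
proof
  assume "GE k u u"
  then obtain i j s t where "i<j" "gE s t" "u = loc i j s" "u = loc i j t" unfolding GE_def by blast
  then show False using loc_inj[of i j s t] gE_irr by auto
qed

lemma simple: "simple_graph (GV k) (GE k)"
  unfolding simple_graph_def using GV_finite GE_in GE_sym GE_irr by blast

lemma card_col: "i \<noteq> j \<Longrightarrow> \<not> (cl s = cl t \<and> cl t = cl u) \<Longrightarrow>
  card {col (loc i j s), col (loc i j t), col (loc i j u)} = 2"
  unfolding col_loc card3_2 by (cases "cl s"; cases "cl t"; cases "cl u") simp_all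

lemma col_ok: "K3_worm_coloring (GV k) (GE k) col"
  unfolding K3_worm_coloring_def
proof (intro allI impI)
  fix x y z assume T: "Defs.triangle (GV k) (GE k) x y z"
  obtain i j s t u where h0: "i<j \<and> j<k \<and> gE s t \<and> gE t u \<and> gE s u \<and> x = loc i j s \<and> y = loc i j t \<and> z = loc i j u"
    using tri_local[OF T] by (elim exE) (rule that)
  then have h: "i<j" "gE s t" "gE t u" "gE s u" "x = loc i j s" "y = loc i j t" "z = loc i j u" by simp_all
  have "\<not> (cl s = cl t \<and> cl t = cl u)" by (rule local_ok[OF h(2-4)])
  then show "card {col x, col y, col z} = 2" using card_col[of i j s t u] h(1) unfolding h(5-7) by simp
qed

lemma col_img: "col ` GV k = {..<k}"
proof
  show "col ` GV k \<subseteq> {..<k}" by (auto simp: GV_def)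
  show "{..<k} \<subseteq> col ` GV k"
  proof
    fix i assume "i \<in> {..<k}"
    then have "Inl i \<in> GV k" by (auto simp: GV_def)
    then show "i \<in> col ` GV k" by force
  qed
qed

lemma tri_loc:
  assumes "i<j" "j<k" "gE s t" "gE t u" "gE s u" "s\<noteq>t" "t\<noteq>u" "s\<noteq>u"
  shows "Defs.triangle (GV k) (GE k) (loc i j s) (loc i j t) (loc i j u)"
proof -
  have ij: "i \<noteq> j" using assms by simp
  have l: "s<8" "t<8" "u<8" using gE_lt assms by blast+
  have e1: "GE k (loc i j s) (loc i j t)" unfolding GE_def using assms by blast
  have e2: "GE k (loc i j t) (loc i j u)" unfolding GE_def using assms by blast
  have e3: "GE k (loc i j s) (loc i j u)" unfolding GE_def using assms by blast
  have d1: "loc i j s \<noteq> loc i j t" using loc_inj[OF ij] assms(6) by blast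
  have d2: "loc i j t \<noteq> loc i j u" using loc_inj[OF ij] assms(7) by blast
  have d3: "loc i j s \<noteq> loc i j u" using loc_inj[OF ij] assms(8) by blast
  have m: "loc i j s \<in> GV k" "loc i j t \<in> GV k" "loc i j u \<in> GV k"
    using loc_in[OF assms(1,2)] l by blast+
  show ?thesis unfolding Defs.triangle_def using e1 e2 e3 d1 d2 d3 m by blast
qed


lemma lower:
  assumes f: "K3_worm_coloring (GV k) (GE k) f"
  shows "k \<le> card (f ` GV k)"
proof -
  have ne: "f (Inl i) \<noteq> f (Inl j)" if ij: "i<j" "j<k" for i j
  proof -
    have T: "card {f (loc i j s), f (loc i j t), f (loc i j u)} = 2"
      if "gE s t" "gE t u" "gE s u" "s\<noteq>t" "t\<noteq>u" "s\<noteq>u" for s t u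
      using f tri_loc[OF ij that] unfolding K3_worm_coloring_def by blast
    have t0: "card {f (loc i j 0), f (loc i j 3), f (loc i j 4)} = 2" by (rule T) (simp_all add: gE_def gedges_def)
    have t1: "card {f (loc i j 0), f (loc i j 3), f (loc i j 5)} = 2" by (rule T) (simp_all add: gE_def gedges_def)
    have t2: "card {f (loc i j 0), f (loc i j 4), f (loc i j 5)} = 2" by (rule T) (simp_all add: gE_def gedges_def)
    have t3: "card {f (loc i j 1), f (loc i j 2), f (loc i j 5)} = 2" by (rule T) (simp_all add: gE_def gedges_def)
    have t4: "card {f (loc i j 1), f (loc i j 2), f (loc i j 7)} = 2" by (rule T) (simp_all add: gE_def gedges_def)
    have t5: "card {f (loc i j 1), f (loc i j 5), f (loc i j 6)} = 2" by (rule T) (simp_all add: gE_def gedges_def)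
    have t6: "card {f (loc i j 1), f (loc i j 5), f (loc i j 7)} = 2" by (rule T) (simp_all add: gE_def gedges_def)
    have t7: "card {f (loc i j 1), f (loc i j 6), f (loc i j 7)} = 2" by (rule T) (simp_all add: gE_def gedges_def)
    have t8: "card {f (loc i j 2), f (loc i j 3), f (loc i j 5)} = 2" by (rule T) (simp_all add: gE_def gedges_def)
    have t9: "card {f (loc i j 2), f (loc i j 3), f (loc i j 7)} = 2" by (rule T) (simp_all add: gE_def gedges_def)
    have t10: "card {f (loc i j 2), f (loc i j 5), f (loc i j 7)} = 2" by (rule T) (simp_all add: gE_def gedges_def)
    have t11: "card {f (loc i j 3), f (loc i j 4), f (loc i j 5)} = 2" by (rule T) (simp_all add: gE_def gedges_def)
    have t12: "card {f (loc i j 3), f (loc i j 4), f (loc i j 7)} = 2" by (rule T) (simp_all add: gE_def gedges_def)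
    have t13: "card {f (loc i j 3), f (loc i j 5), f (loc i j 7)} = 2" by (rule T) (simp_all add: gE_def gedges_def)
    have t14: "card {f (loc i j 4), f (loc i j 5), f (loc i j 6)} = 2" by (rule T) (simp_all add: gE_def gedges_def)
    have t15: "card {f (loc i j 4), f (loc i j 5), f (loc i j 7)} = 2" by (rule T) (simp_all add: gE_def gedges_def)
    have t16: "card {f (loc i j 4), f (loc i j 6), f (loc i j 7)} = 2" by (rule T) (simp_all add: gE_def gedges_def)
    have t17: "card {f (loc i j 5), f (loc i j 6), f (loc i j 7)} = 2" by (rule T) (simp_all add: gE_def gedges_def)
    have "f (loc i j 0) \<noteq> f (loc i j 1)"
      by (rule gadget[of "\<lambda>s. f (loc i j s)", OF t0 t1 t2 t3 t4 t5 t6 t7 t8 t9 t10 t11 t12 t13 t14 t15 t16 t17])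
    then show ?thesis by (simp add: loc_def)
  qed
  have inj: "inj_on f (Inl ` {..<k})"
  proof (rule inj_onI)
    fix a b assume "a \<in> Inl ` {..<k}" "b \<in> Inl ` {..<k}" "f a = f b"
    then obtain i j where "a = Inl i" "b = Inl j" "i<k" "j<k" "f (Inl i) = f (Inl j)" by auto
    then show "a = b" using ne by (metis linorder_neqE_nat)
  qed
  have "card (f ` (Inl ` {..<k})) = k"
    using card_image[OF inj] by (simp add: card_image)
  moreover have "f ` (Inl ` {..<k}) \<subseteq> f ` GV k" by (auto simp: GV_def)
  ultimately show ?thesis using card_mono[OF finite_imageI[OF GV_finite]] by metis
qed

lemma W_GV: "W_minus_K3 (GV k) (GE k) = k"
  unfolding W_minus_K3_def
proof (rule Least_equality)
  show "\<exists>f. K3_worm_coloring (GV k) (GE k) f \<and> card (f ` GV k) = k"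
    using col_ok[of k] col_img[of k] by (intro exI[of _ col]) simp
  show "\<And>n. \<exists>f. K3_worm_coloring (GV k) (GE k) f \<and> card (f ` GV k) = n \<Longrightarrow> k \<le> n"
    using lower by blast
qed

lemma transport:
  fixes V :: "'a::countable set"
  assumes sg0: "simple_graph V E" and cw: "K3_worm_colorable V E"
  shows "\<exists>(V' :: nat set) E'. simple_graph V' E' \<and> K3_worm_colorable V' E' \<and> W_minus_K3 V' E' = W_minus_K3 V E"
proof -
  define V' where "V' = to_nat ` V"
  define E' where "E' = (\<lambda>u v. u \<in> V' \<and> v \<in> V' \<and> E (from_nat u) (from_nat v))"
  have memV: "to_nat a \<in> V' \<longleftrightarrow> a \<in> V" for a
    unfolding V'_def by (rule inj_image_mem_iff[OF inj_to_nat])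
  have EV: "E a b \<Longrightarrow> a \<in> V \<and> b \<in> V" for a b using sg0 unfolding simple_graph_def by blast
  have Eeq: "E' (to_nat a) (to_nat b) \<longleftrightarrow> E a b" for a b
    unfolding E'_def using memV EV by auto
  have inj: "to_nat a = to_nat b \<longleftrightarrow> a = b" for a b :: 'a
    by (rule inj_eq[OF inj_to_nat])
  have tri: "Defs.triangle V' E' (to_nat a) (to_nat b) (to_nat c) \<longleftrightarrow> Defs.triangle V E a b c" for a b c
    unfolding Defs.triangle_def memV Eeq inj by (rule refl)
  have triV: "Defs.triangle V' E' u v w \<Longrightarrow> \<exists>(a::'a) (b::'a) (c::'a). u = to_nat a \<and> v = to_nat b \<and> w = to_nat c" for u v w
    unfolding Defs.triangle_def V'_def by auto
  have col: "K3_worm_coloring V' E' g \<longleftrightarrow> K3_worm_coloring V E (g \<circ> to_nat)" for g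
  proof
    assume h: "K3_worm_coloring V' E' g"
    show "K3_worm_coloring V E (g \<circ> to_nat)"
      unfolding K3_worm_coloring_def
    proof (intro allI impI)
      fix a b c assume "Defs.triangle V E a b c"
      then have "Defs.triangle V' E' (to_nat a) (to_nat b) (to_nat c)" using tri by blast
      then show "card {(g \<circ> to_nat) a, (g \<circ> to_nat) b, (g \<circ> to_nat) c} = 2"
        using h unfolding K3_worm_coloring_def by simp
    qed
  next
    assume h: "K3_worm_coloring V E (g \<circ> to_nat)"
    show "K3_worm_coloring V' E' g"
      unfolding K3_worm_coloring_def
    proof (intro allI impI)
      fix u v w assume t: "Defs.triangle V' E' u v w"
      then obtain a b c :: 'a where abc: "u = to_nat a" "v = to_nat b" "w = to_nat c" using triV by blast
      then have "Defs.triangle V E a b c" using t tri by blast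
      then have "card {(g \<circ> to_nat) a, (g \<circ> to_nat) b, (g \<circ> to_nat) c} = 2"
        using h unfolding K3_worm_coloring_def by blast
      then show "card {g u, g v, g w} = 2" using abc by simp
    qed
  qed
  have cardeq: "card (g ` V') = card ((g \<circ> to_nat) ` V)" for g
    unfolding V'_def by (simp add: image_comp)
  have S: "{n. \<exists>g. K3_worm_coloring V' E' g \<and> card (g ` V') = n} = {n. \<exists>f. K3_worm_coloring V E f \<and> card (f ` V) = n}"
  proof (rule Collect_cong, rule iffI)
    fix n assume "\<exists>g. K3_worm_coloring V' E' g \<and> card (g ` V') = n"
    then obtain g where "K3_worm_coloring V' E' g" "card (g ` V') = n" by blast
    then show "\<exists>f. K3_worm_coloring V E f \<and> card (f ` V) = n"
      using col cardeq by metis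
  next
    fix n assume "\<exists>f. K3_worm_coloring V E f \<and> card (f ` V) = n"
    then obtain f where f: "K3_worm_coloring V E f" "card (f ` V) = n" by blast
    have ff: "(f \<circ> from_nat) \<circ> to_nat = f" by (simp add: comp_def)
    have "K3_worm_coloring V' E' (f \<circ> from_nat)" using col[of "f \<circ> from_nat"] f(1) ff by simp
    moreover have "card ((f \<circ> from_nat) ` V') = n" using cardeq[of "f \<circ> from_nat"] f(2) ff by simp
    ultimately show "\<exists>g. K3_worm_coloring V' E' g \<and> card (g ` V') = n" by blast
  qed
  have sg: "simple_graph V' E'"
    using sg0 unfolding simple_graph_def V'_def E'_def by auto
  have cc: "K3_worm_colorable V' E'"
  proof -
    obtain f where f: "K3_worm_coloring V E f" using cw unfolding K3_worm_colorable_def by blast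
    have ff: "(f \<circ> from_nat) \<circ> to_nat = f" by (simp add: comp_def)
    have "K3_worm_coloring V' E' (f \<circ> from_nat)" using col[of "f \<circ> from_nat"] f ff by simp
    then show ?thesis unfolding K3_worm_colorable_def by blast
  qed
  have P: "(\<exists>g. K3_worm_coloring V' E' g \<and> card (g ` V') = n) \<longleftrightarrow> (\<exists>f. K3_worm_coloring V E f \<and> card (f ` V) = n)" for n
    using S unfolding set_eq_iff mem_Collect_eq by blast
  have "W_minus_K3 V' E' = W_minus_K3 V E"
    unfolding W_minus_K3_def P by (rule refl)
  then show ?thesis using sg cc by blast
qed

theorem mainTheorem3:
  fixes k :: nat
  assumes "k \<ge> 3"
  shows "\<exists>(V :: nat set) E. simple_graph V E \<and> K3_worm_colorable V E \<and> W_minus_K3 V E = k"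
  using transport[OF simple[of k]] col_ok[of k] W_GV[of k] unfolding K3_worm_colorable_def by metis

end
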